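(* Let $M$ be a matroid of rank $n$, where $n \ge 2$, let $B_1, \dots, B_n$ be pairwise disjoint bases of $M$, and let $\alpha = 3\lceil \log n\rceil$. Suppose $\alpha$-element subsets $S_1 \subseteq B_1, \dots, S_n \subseteq B_n$ are chosen independently, each uniformly at random. Then the probability that $(S_1,\dots,S_n)$ does not contain a transversal basis (a basis of $M$ containing exactly one element from each $S_i$) is at most $$\sum_{k=1}^{n} \binom{n}{k}\binom{n}{k-1}\left(\frac{k-1}{n}\right)^{k\alpha}.$$
   Context: Here $\log$ denotes the natural logarithm. *)

theory Defs
  imports "HOL-Probability.Probability"
begin

definition matroid :: "'a set \<Rightarrow> ('a set \<Rightarrow> bool) \<Rightarrow> bool" where
  "matroid E indep \<longleftrightarrow>
     finite E \<and> indep {} \<and>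
     (\<forall>X. indep X \<longrightarrow> X \<subseteq> E) \<and>
     (\<forall>X Y. indep X \<and> Y \<subseteq> X \<longrightarrow> indep Y) \<and>
     (\<forall>X Y. indep X \<and> indep Y \<and> card X < card Y \<longrightarrow>
        (\<exists>y \<in> Y - X. indep (insert y X)))"

definition matroid_basis :: "'a set \<Rightarrow> ('a set \<Rightarrow> bool) \<Rightarrow> 'a set \<Rightarrow> bool" where
  "matroid_basis E indep B \<longleftrightarrow>
     indep B \<and> B \<subseteq> E \<and> (\<forall>X. X \<subseteq> E \<and> indep X \<and> B \<subseteq> X \<longrightarrow> X = B)"

definition matroid_rank :: "'a set \<Rightarrow> ('a set \<Rightarrow> bool) \<Rightarrow> nat" where
  "matroid_rank E indep = Max {card X | X. X \<subseteq> E \<and> indep X}"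

definition has_transversal_basis ::
  "'a set \<Rightarrow> ('a set \<Rightarrow> bool) \<Rightarrow> nat \<Rightarrow> (nat \<Rightarrow> 'a set) \<Rightarrow> bool" where
  "has_transversal_basis E indep n S \<longleftrightarrow>
     (\<exists>T. matroid_basis E indep T \<and> (\<forall>i\<in>{1..n}. card (T \<inter> S i) = 1))"

definition random_subsets :: "nat \<Rightarrow> (nat \<Rightarrow> 'a set) \<Rightarrow> nat \<Rightarrow> (nat \<Rightarrow> 'a set) pmf" where
  "random_subsets n B m =
     Pi_pmf {1..n} {} (\<lambda>i. pmf_of_set {S. S \<subseteq> B i \<and> card S = m})"

end

theory Submission
  imports Defs
begin

definition rk :: "('a set \<Rightarrow> bool) \<Rightarrow> 'a set \<Rightarrow> nat" where
  "rk indep X = Max {card Y | Y. Y \<subseteq> X \<and> indep Y}"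

context
  fixes E :: "'a set" and indep :: "'a set \<Rightarrow> bool"
  assumes M: "matroid E indep"
begin

lemma finE: "finite E" using M by (simp add: matroid_def)
lemma indep_empty: "indep {}" using M by (simp add: matroid_def)
lemma indep_sub: "indep X \<Longrightarrow> X \<subseteq> E" using M by (simp add: matroid_def)
lemma indep_subset: "indep X \<Longrightarrow> Y \<subseteq> X \<Longrightarrow> indep Y" using M by (simp add: matroid_def)
lemma indep_aug: "indep X \<Longrightarrow> indep Y \<Longrightarrow> card X < card Y \<Longrightarrow> \<exists>y\<in>Y-X. indep (insert y X)"
  using M by (simp add: matroid_def)
lemma indep_finite: "indep X \<Longrightarrow> finite X"
  by (rule finite_subset[OF indep_sub finE])

lemma rk_set_finite: "finite {card Y | Y. Y \<subseteq> X \<and> indep Y}"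
proof -
  have "{card Y | Y. Y \<subseteq> X \<and> indep Y} \<subseteq> card ` Pow E"
    using indep_sub by auto
  moreover have "finite (card ` Pow E)" using finE by simp
  ultimately show ?thesis by (rule finite_subset)
qed

lemma rk_ge: assumes "indep Y" "Y \<subseteq> X" shows "card Y \<le> rk indep X"
proof -
  have "card Y \<in> {card Y | Y. Y \<subseteq> X \<and> indep Y}" using assms by blast
  thus ?thesis unfolding rk_def by (rule Max_ge[OF rk_set_finite])
qed

lemma rk_obtain: "\<exists>Y. Y \<subseteq> X \<and> indep Y \<and> card Y = rk indep X"
proof -
  have ne: "{card Y | Y. Y \<subseteq> X \<and> indep Y} \<noteq> {}" using indep_empty by blast
  have "Max {card Y | Y. Y \<subseteq> X \<and> indep Y} \<in> {card Y | Y. Y \<subseteq> X \<and> indep Y}"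
    by (rule Max_in[OF rk_set_finite ne])
  then obtain Y where "Y \<subseteq> X" "indep Y" "card Y = Max {card Y | Y. Y \<subseteq> X \<and> indep Y}"
    by auto
  then show ?thesis unfolding rk_def by blast
qed

lemma rk_mono: assumes "X \<subseteq> Z" shows "rk indep X \<le> rk indep Z"
proof -
  obtain Y where Y: "Y \<subseteq> X" "indep Y" "card Y = rk indep X" using rk_obtain[of X] by blast
  have "card Y \<le> rk indep Z" using Y(1) assms by (intro rk_ge[OF Y(2)]) blast
  thus ?thesis using Y(3) by simp
qed

lemma rk_le_card: assumes "finite X" shows "rk indep X \<le> card X"
proof -
  obtain Y where Y: "Y \<subseteq> X" "indep Y" "card Y = rk indep X" using rk_obtain[of X] by blast
  have "card Y \<le> card X" by (rule card_mono[OF assms Y(1)])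
  thus ?thesis using Y(3) by simp
qed

lemma rk_eq_card_indep: assumes "finite X" "rk indep X = card X" shows "indep X"
proof -
  obtain Y where Y: "Y \<subseteq> X" "indep Y" "card Y = rk indep X" using rk_obtain[of X] by blast
  have "card Y = card X" using Y(3) assms(2) by simp
  hence "Y = X" by (rule card_subset_eq[OF assms(1) Y(1)])
  thus ?thesis using Y(2) by simp
qed

lemma rk_empty: "rk indep {} = 0"
  using rk_le_card[of "{}"] by simp

lemma rk_le_rank: "rk indep X \<le> rk indep E"
proof -
  obtain Y where Y: "Y \<subseteq> X" "indep Y" "card Y = rk indep X" using rk_obtain[of X] by blast
  have "card Y \<le> rk indep E" by (rule rk_ge[OF Y(2) indep_sub[OF Y(2)]])
  thus ?thesis using Y(3) by simp
qed

lemma rk_extend: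
  assumes "indep J" "J \<subseteq> Y"
  shows "\<exists>J'. J \<subseteq> J' \<and> J' \<subseteq> Y \<and> indep J' \<and> card J' = rk indep Y"
proof -
  define F where "F = {J'. J \<subseteq> J' \<and> J' \<subseteq> Y \<and> indep J'}"
  have Fsub: "F \<subseteq> Pow E" unfolding F_def using indep_sub by auto
  hence finF: "finite F" by (rule finite_subset) (simp add: finE)
  have JF: "J \<in> F" unfolding F_def using assms by simp
  define m where "m = Max (card ` F)"
  have "m \<in> card ` F" unfolding m_def using finF JF by (intro Max_in) auto
  then obtain J' where J': "J' \<in> F" "card J' = m" by blast
  have mx: "card J'' \<le> card J'" if "J'' \<in> F" for J''
  proof -
    have "card J'' \<le> m" unfolding m_def using finF that by simp
    thus ?thesis using J'(2) by simp
  qed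
  have J'p: "J \<subseteq> J'" "J' \<subseteq> Y" "indep J'" using J'(1) unfolding F_def by auto
  have le: "card J' \<le> rk indep Y" by (rule rk_ge[OF J'p(3) J'p(2)])
  have "card J' = rk indep Y"
  proof (rule ccontr)
    assume "card J' \<noteq> rk indep Y"
    hence lt: "card J' < rk indep Y" using le by simp
    obtain Z where Z: "Z \<subseteq> Y" "indep Z" "card Z = rk indep Y" using rk_obtain[of Y] by blast
    have lt2: "card J' < card Z" using lt Z(3) by simp
    obtain z where z: "z \<in> Z - J'" "indep (insert z J')"
      using indep_aug[OF J'p(3) Z(2) lt2] by blast
    have "insert z J' \<in> F" unfolding F_def using z Z(1) J'p by auto
    hence "card (insert z J') \<le> card J'" by (rule mx)
    moreover have "finite J'" by (rule indep_finite[OF J'p(3)])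
    ultimately show False using z(1) by simp
  qed
  then show ?thesis using J'p by blast
qed

lemma rk_insert: "rk indep (insert x X) \<le> Suc (rk indep X)"
proof -
  obtain Y where Y: "Y \<subseteq> insert x X" "indep Y" "card Y = rk indep (insert x X)"
    using rk_obtain[of "insert x X"] by blast
  have i: "indep (Y - {x})" by (rule indep_subset[OF Y(2)]) blast
  have s: "Y - {x} \<subseteq> X" using Y(1) by blast
  have c1: "card (Y - {x}) \<le> rk indep X" by (rule rk_ge[OF i s])
  have fY: "finite Y" by (rule indep_finite[OF Y(2)])
  have c2: "card Y \<le> Suc (card (Y - {x}))"
  proof (cases "x \<in> Y")
    case True
    have "card Y = Suc (card (Y - {x}))" by (rule card.remove[OF fY True])
    thus ?thesis by simp
  next
    case False thus ?thesis by simp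
  qed
  show ?thesis using c1 c2 Y(3) by simp
qed

lemma rk_closure:
  assumes "\<forall>a\<in>A. rk indep (insert a X) = rk indep X"
  shows "rk indep (X \<union> A) = rk indep X"
proof (rule ccontr)
  assume ne: "rk indep (X \<union> A) \<noteq> rk indep X"
  have "rk indep X \<le> rk indep (X \<union> A)" by (rule rk_mono) blast
  hence lt: "rk indep X < rk indep (X \<union> A)" using ne by simp
  obtain I where I: "I \<subseteq> X" "indep I" "card I = rk indep X" using rk_obtain[of X] by blast
  obtain J where J: "J \<subseteq> X \<union> A" "indep J" "card J = rk indep (X \<union> A)"
    using rk_obtain[of "X \<union> A"] by blast
  have cIJ: "card I < card J" using I(3) J(3) lt by simp
  obtain z where z: "z \<in> J - I" "indep (insert z I)"
    using indep_aug[OF I(2) J(2) cIJ] by blast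
  have fI: "finite I" by (rule indep_finite[OF I(2)])
  have c1: "card (insert z I) = Suc (rk indep X)"
    using z(1) fI I(3) by simp
  have s: "insert z I \<subseteq> insert z X" using I(1) by blast
  have c2: "card (insert z I) \<le> rk indep (insert z X)" by (rule rk_ge[OF z(2) s])
  have gt: "rk indep X < rk indep (insert z X)" using c1 c2 by simp
  show False
  proof (cases "z \<in> X")
    case True
    hence "insert z X = X" by blast
    thus False using gt by simp
  next
    case False
    hence "z \<in> A" using z(1) J(1) by blast
    hence "rk indep (insert z X) = rk indep X" using assms by blast
    thus False using gt by simp
  qed
qed

lemma rk_submod: "rk indep (P \<union> Q) + rk indep (P \<inter> Q) \<le> rk indep P + rk indep Q"
proof -
  obtain J where J: "J \<subseteq> P \<inter> Q" "indep J" "card J = rk indep (P \<inter> Q)"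
    using rk_obtain[of "P \<inter> Q"] by blast
  have JPQ: "J \<subseteq> P \<union> Q" using J(1) by blast
  obtain J' where J': "J \<subseteq> J'" "J' \<subseteq> P \<union> Q" "indep J'" "card J' = rk indep (P \<union> Q)"
    using rk_extend[OF J(2) JPQ] by blast
  have fin: "finite J'" by (rule indep_finite[OF J'(3)])
  have ip: "indep (J' \<inter> P)" by (rule indep_subset[OF J'(3)]) blast
  have iq: "indep (J' \<inter> Q)" by (rule indep_subset[OF J'(3)]) blast
  have a: "card (J' \<inter> P) \<le> rk indep P" by (rule rk_ge[OF ip]) blast
  have b: "card (J' \<inter> Q) \<le> rk indep Q" by (rule rk_ge[OF iq]) blast
  have c: "card (J' \<inter> P) + card (J' \<inter> Q) = card ((J' \<inter> P) \<union> (J' \<inter> Q)) + card ((J' \<inter> P) \<inter> (J' \<inter> Q))"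
    by (rule card_Un_Int) (use fin in auto)
  have d: "(J' \<inter> P) \<union> (J' \<inter> Q) = J'" using J'(2) by blast
  have e0: "J \<subseteq> (J' \<inter> P) \<inter> (J' \<inter> Q)" using J(1) J'(1) by blast
  have e: "card J \<le> card ((J' \<inter> P) \<inter> (J' \<inter> Q))"
    by (rule card_mono[OF _ e0]) (use fin in auto)
  have "card (J' \<inter> P) + card (J' \<inter> Q) \<ge> card J' + card J" using c d e by simp
  thus ?thesis using a b J(3) J'(4) by linarith
qed

end

lemma rado_aux:
  assumes M: "matroid E indep" and finA: "finite A"
  shows "\<forall>S. (\<Sum>i\<in>A. card (S i)) = N \<longrightarrow> (\<forall>i\<in>A. S i \<subseteq> E) \<longrightarrow>
           (\<forall>I\<subseteq>A. card I \<le> rk indep (\<Union>(S ` I))) \<longrightarrow>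
           (\<exists>f. (\<forall>i\<in>A. f i \<in> S i) \<and> inj_on f A \<and> indep (f ` A))"
proof (induction N rule: less_induct)
  case (less N)
  show ?case
  proof (intro allI impI)
    fix S :: "'b \<Rightarrow> 'a set"
    assume N: "(\<Sum>i\<in>A. card (S i)) = N" and SE: "\<forall>i\<in>A. S i \<subseteq> E"
      and hall: "\<forall>I\<subseteq>A. card I \<le> rk indep (\<Union>(S ` I))"
    have finS: "finite (S i)" if "i \<in> A" for i
      using SE that finE[OF M] finite_subset by blast
    show "\<exists>f. (\<forall>i\<in>A. f i \<in> S i) \<and> inj_on f A \<and> indep (f ` A)"
    proof (cases "\<forall>i\<in>A. card (S i) \<le> 1")
      case True
      have ne: "S i \<noteq> {}" if "i \<in> A" for i
      proof
        assume "S i = {}"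
        with hall[rule_format, of "{i}"] that show False by (simp add: rk_empty[OF M])
      qed
      have c1: "card (S i) = 1" if "i \<in> A" for i
      proof -
        have "card (S i) \<noteq> 0" using ne[OF that] finS[OF that] by simp
        moreover have "card (S i) \<le> 1" using True that by blast
        ultimately show ?thesis by linarith
      qed
      have single: "\<exists>x. S i = {x}" if "i \<in> A" for i
      proof -
        have "card (S i) = Suc 0" using c1[OF that] by simp
        thus ?thesis by (simp only: card_1_singleton_iff)
      qed
      define f where "f i = the_elem (S i)" for i
      have fS: "S i = {f i}" if iA: "i \<in> A" for i
      proof -
        obtain x where x: "S i = {x}" using single[OF iA] by blast
        thus ?thesis unfolding f_def by simp
      qed
      have U: "\<Union>(S ` A) = f ` A"
      proof (rule set_eqI)
        fix z show "z \<in> \<Union>(S ` A) \<longleftrightarrow> z \<in> f ` A"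
        proof
          assume "z \<in> \<Union>(S ` A)"
          then obtain i where "i \<in> A" "z \<in> S i" by blast
          thus "z \<in> f ` A" using fS[of i] by auto
        next
          assume "z \<in> f ` A"
          then obtain i where "i \<in> A" "z = f i" by blast
          thus "z \<in> \<Union>(S ` A)" using fS[of i] by auto
        qed
      qed
      have c1: "card A \<le> rk indep (f ` A)" using hall[rule_format, of A] U by simp
      have c2: "rk indep (f ` A) \<le> card (f ` A)" using finA by (intro rk_le_card[OF M]) auto
      have c3: "card (f ` A) \<le> card A" by (rule card_image_le[OF finA])
      have inj: "inj_on f A" using c1 c2 c3 finA by (intro eq_card_imp_inj_on) auto
      have ind: "indep (f ` A)" using c1 c2 c3 finA by (intro rk_eq_card_indep[OF M]) auto
      show ?thesis using inj ind fS by (intro exI[of _ f]) auto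
    next
      case False
      then obtain i0 where i0: "i0 \<in> A" "card (S i0) > 1" by (auto simp: not_le)
      then obtain x where x: "x \<in> S i0" by fastforce
      have "card (S i0 - {x}) > 0" using i0 x finS[OF i0(1)] by simp
      then obtain y where y: "y \<in> S i0" "y \<noteq> x" by (metis card_gt_0_iff Diff_iff ex_in_conv singletonI)
      define Sx where "Sx = S(i0 := S i0 - {x})"
      define Sy where "Sy = S(i0 := S i0 - {y})"
      have sx_lt: "(\<Sum>i\<in>A. card (Sx i)) < N"
        unfolding N[symmetric]
      proof (rule sum_strict_mono_ex1[OF finA])
        show "\<forall>i\<in>A. card (Sx i) \<le> card (S i)"
          using finS unfolding Sx_def by (auto intro: card_mono)
        show "\<exists>a\<in>A. card (Sx a) < card (S a)"
          using i0 x finS[OF i0(1)] unfolding Sx_def by (intro bexI[of _ i0]) (auto intro: psubset_card_mono)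
      qed
      have sy_lt: "(\<Sum>i\<in>A. card (Sy i)) < N"
        unfolding N[symmetric]
      proof (rule sum_strict_mono_ex1[OF finA])
        show "\<forall>i\<in>A. card (Sy i) \<le> card (S i)"
          using finS unfolding Sy_def by (auto intro: card_mono)
        show "\<exists>a\<in>A. card (Sy a) < card (S a)"
          using i0 y finS[OF i0(1)] unfolding Sy_def by (intro bexI[of _ i0]) (auto intro: psubset_card_mono)
      qed
      have SxE: "\<forall>i\<in>A. Sx i \<subseteq> E" using SE unfolding Sx_def by auto
      have SyE: "\<forall>i\<in>A. Sy i \<subseteq> E" using SE unfolding Sy_def by auto
      have "(\<forall>I\<subseteq>A. card I \<le> rk indep (\<Union>(Sx ` I))) \<or> (\<forall>I\<subseteq>A. card I \<le> rk indep (\<Union>(Sy ` I)))"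
      proof (rule ccontr)
        assume "\<not> ?thesis"
        then obtain I1 I2 where I1: "I1 \<subseteq> A" "rk indep (\<Union>(Sx ` I1)) < card I1"
          and I2: "I2 \<subseteq> A" "rk indep (\<Union>(Sy ` I2)) < card I2"
          by (auto simp: not_le)
        have "i0 \<in> I1"
        proof (rule ccontr)
          assume "i0 \<notin> I1"
          hence "Sx ` I1 = S ` I1" unfolding Sx_def by auto
          thus False using I1 hall by (metis not_le)
        qed
        have "i0 \<in> I2"
        proof (rule ccontr)
          assume "i0 \<notin> I2"
          hence "Sy ` I2 = S ` I2" unfolding Sy_def by auto
          thus False using I2 hall by (metis not_le)
        qed
        define P where "P = \<Union>(Sx ` I1)"
        define Q where "Q = \<Union>(Sy ` I2)"
        have sub1: "\<Union>(S ` (I1 \<union> I2)) \<subseteq> P \<union> Q"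
          using \<open>i0 \<in> I1\<close> \<open>i0 \<in> I2\<close> y(2) unfolding P_def Q_def Sx_def Sy_def by fastforce
        have sub2: "\<Union>(S ` (I1 \<inter> I2 - {i0})) \<subseteq> P \<inter> Q"
          unfolding P_def Q_def Sx_def Sy_def by fastforce
        have A1: "I1 \<union> I2 \<subseteq> A" using I1(1) I2(1) by blast
        have A2: "I1 \<inter> I2 - {i0} \<subseteq> A" using I1(1) by blast
        have h1: "card (I1 \<union> I2) \<le> rk indep (P \<union> Q)"
          using hall[rule_format, OF A1] rk_mono[OF M sub1] by linarith
        have h2: "card (I1 \<inter> I2 - {i0}) \<le> rk indep (P \<inter> Q)"
          using hall[rule_format, OF A2] rk_mono[OF M sub2] by linarith
        have fin1: "finite I1" "finite I2" using I1 I2 finA finite_subset by auto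
        have h3: "card (I1 \<inter> I2 - {i0}) = card (I1 \<inter> I2) - 1"
          using fin1 \<open>i0 \<in> I1\<close> \<open>i0 \<in> I2\<close> by simp
        have h4: "card (I1 \<inter> I2) \<ge> 1"
          using fin1 \<open>i0 \<in> I1\<close> \<open>i0 \<in> I2\<close> by (metis IntI card_0_eq finite_Int empty_iff less_one not_le)
        have h5: "card I1 + card I2 = card (I1 \<union> I2) + card (I1 \<inter> I2)"
          using fin1 by (rule card_Un_Int)
        have h6: "rk indep (P \<union> Q) + rk indep (P \<inter> Q) \<le> rk indep P + rk indep Q"
          by (rule rk_submod[OF M])
        show False using h1 h2 h3 h4 h5 h6 I1(2) I2(2) unfolding P_def Q_def by linarith
      qed
      then show ?thesis
      proof
        assume H: "\<forall>I\<subseteq>A. card I \<le> rk indep (\<Union>(Sx ` I))"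
        obtain f where f: "\<forall>i\<in>A. f i \<in> Sx i" "inj_on f A" "indep (f ` A)"
          using less.IH[OF sx_lt, rule_format, of Sx] SxE H by blast
        show ?thesis using f unfolding Sx_def by (intro exI[of _ f]) (auto split: if_splits)
      next
        assume H: "\<forall>I\<subseteq>A. card I \<le> rk indep (\<Union>(Sy ` I))"
        obtain f where f: "\<forall>i\<in>A. f i \<in> Sy i" "inj_on f A" "indep (f ` A)"
          using less.IH[OF sy_lt, rule_format, of Sy] SyE H by blast
        show ?thesis using f unfolding Sy_def by (intro exI[of _ f]) (auto split: if_splits)
      qed
    qed
  qed
qed

lemma rado:
  assumes M: "matroid E indep" and finA: "finite A" and SE: "\<forall>i\<in>A. S i \<subseteq> E"
    and hall: "\<forall>I\<subseteq>A. card I \<le> rk indep (\<Union>(S ` I))"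
  shows "\<exists>f. (\<forall>i\<in>A. f i \<in> S i) \<and> inj_on f A \<and> indep (f ` A)"
  using rado_aux[OF M finA, of "\<Sum>i\<in>A. card (S i)"] SE hall by blast

definition hh :: "nat \<Rightarrow> nat \<Rightarrow> nat \<Rightarrow> real" where
  "hh n K r = (if r \<le> K then real ((n - r) choose (K - r)) else 0)"

lemma hh_nonneg: "0 \<le> hh n K r" unfolding hh_def by simp

lemma hh_ge1: "r \<le> K \<Longrightarrow> K \<le> n \<Longrightarrow> 1 \<le> hh n K r"
  unfolding hh_def by (simp add: Suc_leI zero_less_binomial)

lemma hh_mono: assumes "K \<le> n" shows "hh n K (Suc r) \<le> hh n K r"
proof (cases "Suc r \<le> K")
  case True
  hence rn: "r < n" using assms by simp
  have e1: "n - r = Suc (n - Suc r)" using rn by simp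
  have e2: "K - r = Suc (K - Suc r)" using True by simp
  have "(n - Suc r) choose (K - Suc r) \<le> (n - r) choose (K - r)"
    unfolding e1 e2 by simp
  thus ?thesis using True unfolding hh_def by simp
next
  case False thus ?thesis unfolding hh_def by simp
qed

lemma hh_rec: assumes "r < K" "K \<le> n"
  shows "real (n - r) * hh n K (Suc r) = real (K - r) * hh n K r"
proof -
  have e1: "n - r = Suc (n - Suc r)" using assms by simp
  have e2: "K - r = Suc (K - Suc r)" using assms by simp
  have "Suc (n - Suc r) * ((n - Suc r) choose (K - Suc r)) = (Suc (n - Suc r) choose Suc (K - Suc r)) * Suc (K - Suc r)"
    by (rule Suc_times_binomial_eq)
  hence "(n - r) * ((n - Suc r) choose (K - Suc r)) = (K - r) * ((n - r) choose (K - r))"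
    unfolding e1 e2 by simp
  hence "real (n - r) * real ((n - Suc r) choose (K - Suc r)) = real (K - r) * real ((n - r) choose (K - r))"
    by (metis of_nat_mult)
  thus ?thesis using assms unfolding hh_def by simp
qed

lemma key_arith:
  fixes cO t r n K :: nat
  assumes "cO + t \<le> r" "r \<le> n" "K \<le> n"
  shows "real cO * hh n K r + real (n - t - cO) * hh n K (Suc r) \<le> real (K - t) * hh n K r"
proof -
  define x where "x = hh n K r"
  define y where "y = hh n K (Suc r)"
  have y0: "0 \<le> y" unfolding y_def by (rule hh_nonneg)
  have yx: "y \<le> x" unfolding x_def y_def by (rule hh_mono[OF assms(3)])
  have split: "real (n - t - cO) = real (n - r) + real (r - t - cO)" using assms by simp
  have m1: "real (r - t - cO) * y \<le> real (r - t - cO) * x" using yx by (simp add: mult_left_mono)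
  show ?thesis
  proof (cases "r < K")
    case True
    have rec: "real (n - r) * y = real (K - r) * x" unfolding x_def y_def by (rule hh_rec[OF True assms(3)])
    have sp2: "real (K - t) = real cO + real (K - r) + real (r - t - cO)" using assms True by simp
    have "real cO * x + real (n - t - cO) * y = real cO * x + real (n - r) * y + real (r - t - cO) * y"
      unfolding split by (simp add: algebra_simps)
    also have "\<dots> \<le> real cO * x + real (K - r) * x + real (r - t - cO) * x" using rec m1 by simp
    also have "\<dots> = real (K - t) * x" unfolding sp2 by (simp add: algebra_simps)
    finally show ?thesis unfolding x_def y_def .
  next
    case False
    hence y00: "y = 0" unfolding y_def hh_def by simp
    show ?thesis
    proof (cases "r = K")
      case True
      have "real cO \<le> real (K - t)" using assms True by simp
      moreover have "0 \<le> x" unfolding x_def by (rule hh_nonneg)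
      ultimately have "real cO * x \<le> real (K - t) * x" by (rule mult_right_mono)
      thus ?thesis using y00 unfolding x_def y_def by simp
    next
      case False
      hence "x = 0" using \<open>\<not> r < K\<close> unfolding x_def hh_def by simp
      thus ?thesis using y00 unfolding x_def y_def by simp
    qed
  qed
qed

context
  fixes E :: "'a set" and indep :: "'a set \<Rightarrow> bool"
  assumes M: "matroid E indep"
begin

lemma block_step:
  assumes B: "indep B" "card B = n" and rE: "rk indep E = n" and Kn: "K \<le> n"
    and T: "T \<subseteq> B" "T \<subseteq> X"
  shows "(\<Sum>x\<in>B - T. hh n K (rk indep (insert x X))) \<le> real (K - card T) * hh n K (rk indep X)"
proof -
  define r where "r = rk indep X"
  define D where "D = B - T"
  define Ol where "Ol = {x\<in>D. rk indep (insert x X) = r}"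
  define N where "N = D - Ol"
  have finB: "finite B" by (rule indep_finite[OF M B(1)])
  have finD: "finite D" unfolding D_def using finB by simp
  have finT: "finite T" using finB T(1) by (rule finite_subset[rotated])
  have OD: "Ol \<subseteq> D" unfolding Ol_def by blast
  have finO: "finite Ol" using finD OD by (rule finite_subset[rotated])
  have cD: "card D = n - card T" unfolding D_def using finB T(1) B(2) by (simp add: card_Diff_subset finT)
  have cN: "card N = card D - card Ol" unfolding N_def using OD finO by (simp add: card_Diff_subset)
  have sumD: "(\<Sum>x\<in>D. hh n K (rk indep (insert x X))) = (\<Sum>x\<in>Ol. hh n K (rk indep (insert x X))) + (\<Sum>x\<in>N. hh n K (rk indep (insert x X)))"
    unfolding N_def using finD OD by (simp add: sum.subset_diff)
  have sO: "(\<Sum>x\<in>Ol. hh n K (rk indep (insert x X))) = real (card Ol) * hh n K r"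
  proof -
    have "(\<Sum>x\<in>Ol. hh n K (rk indep (insert x X))) = (\<Sum>x\<in>Ol. hh n K r)"
      by (rule sum.cong) (auto simp: Ol_def)
    thus ?thesis by simp
  qed
  have Nval: "rk indep (insert x X) = Suc r" if "x \<in> N" for x
  proof -
    have a: "rk indep (insert x X) \<le> Suc r" unfolding r_def by (rule rk_insert[OF M])
    have b: "r \<le> rk indep (insert x X)" unfolding r_def by (rule rk_mono[OF M]) blast
    have c: "rk indep (insert x X) \<noteq> r" using that unfolding N_def Ol_def by blast
    show ?thesis using a b c by simp
  qed
  have sN: "(\<Sum>x\<in>N. hh n K (rk indep (insert x X))) = real (card N) * hh n K (Suc r)"
  proof -
    have "(\<Sum>x\<in>N. hh n K (rk indep (insert x X))) = (\<Sum>x\<in>N. hh n K (Suc r))"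
      by (rule sum.cong) (use Nval in auto)
    thus ?thesis by simp
  qed
  have cl: "\<forall>a\<in>Ol \<union> T. rk indep (insert a X) = rk indep X"
  proof
    fix a assume "a \<in> Ol \<union> T"
    thus "rk indep (insert a X) = rk indep X"
    proof
      assume "a \<in> Ol" thus ?thesis unfolding Ol_def r_def by blast
    next
      assume "a \<in> T" hence "insert a X = X" using T(2) by blast
      thus ?thesis by simp
    qed
  qed
  have rkOT: "rk indep (X \<union> (Ol \<union> T)) = r" unfolding r_def by (rule rk_closure[OF M cl])
  have OTB: "Ol \<union> T \<subseteq> B" using OD T(1) unfolding D_def by blast
  have iOT: "indep (Ol \<union> T)" by (rule indep_subset[OF M B(1) OTB])
  have "card (Ol \<union> T) \<le> rk indep (X \<union> (Ol \<union> T))" by (rule rk_ge[OF M iOT]) blast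
  moreover have "card (Ol \<union> T) = card Ol + card T"
    by (rule card_Un_disjoint[OF finO finT]) (use OD in \<open>auto simp: D_def\<close>)
  ultimately have OT: "card Ol + card T \<le> r" using rkOT by simp
  have rn: "r \<le> n" unfolding r_def using rk_le_rank[OF M] rE by metis
  have cN2: "card N = n - card T - card Ol" using cN cD by simp
  have "(\<Sum>x\<in>B - T. hh n K (rk indep (insert x X))) = real (card Ol) * hh n K r + real (n - card T - card Ol) * hh n K (Suc r)"
    using sumD sO sN cN2 unfolding D_def by simp
  also have "\<dots> \<le> real (K - card T) * hh n K r"
    by (rule key_arith[OF OT rn Kn])
  finally show ?thesis unfolding r_def .
qed

lemma binom_id: "((a - Suc 0) choose m) * a = (a choose Suc m) * Suc m"
proof (cases a)
  case 0 thus ?thesis by simp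
next
  case (Suc b)
  have "Suc b * (b choose m) = (Suc b choose Suc m) * Suc m" by (rule Suc_times_binomial_eq)
  thus ?thesis using Suc by (simp add: mult.commute)
qed

lemma block:
  assumes B: "indep B" "card B = n" and rE: "rk indep E = n" and Kn: "K \<le> n"
  shows "\<forall>X T. T \<subseteq> B \<longrightarrow> T \<subseteq> X \<longrightarrow>
    (\<Sum>S\<in>{S. S \<subseteq> B - T \<and> card S = m}. hh n K (rk indep (X \<union> S)))
      \<le> real ((K - card T) choose m) * hh n K (rk indep X)"
proof (induction m)
  case 0
  show ?case
  proof (intro allI impI)
    fix X T assume T: "T \<subseteq> B" "T \<subseteq> X"
    have finB: "finite B" by (rule indep_finite[OF M B(1)])
    have e: "{S. S \<subseteq> B - T \<and> card S = 0} = {{}}"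
    proof (rule set_eqI)
      fix S
      show "S \<in> {S. S \<subseteq> B - T \<and> card S = 0} \<longleftrightarrow> S \<in> {{}}"
      proof
        assume "S \<in> {S. S \<subseteq> B - T \<and> card S = 0}"
        hence S: "S \<subseteq> B - T" "card S = 0" by auto
        have "finite S" using finB S(1) by (meson finite_Diff finite_subset)
        thus "S \<in> {{}}" using S(2) by simp
      next
        assume "S \<in> {{}}" thus "S \<in> {S. S \<subseteq> B - T \<and> card S = 0}" by simp
      qed
    qed
    show "(\<Sum>S\<in>{S. S \<subseteq> B - T \<and> card S = 0}. hh n K (rk indep (X \<union> S)))
      \<le> real ((K - card T) choose 0) * hh n K (rk indep X)" unfolding e by simp
  qed
next
  case (Suc m)
  show ?case
  proof (intro allI impI)
    fix X T assume T: "T \<subseteq> B" "T \<subseteq> X"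
    have finB: "finite B" by (rule indep_finite[OF M B(1)])
    have finT: "finite T" using finB T(1) by (rule finite_subset[rotated])
    define D where "D = B - T"
    define g where "g S = hh n K (rk indep (X \<union> S))" for S
    define F where "F = {S. S \<subseteq> D \<and> card S = Suc m}"
    define G where "G x = {S'. S' \<subseteq> D - {x} \<and> card S' = m}" for x
    define C where "C = real ((K - Suc (card T)) choose m)"
    have finD: "finite D" unfolding D_def using finB by simp
    have finF: "finite F"
    proof -
      have "F \<subseteq> Pow D" unfolding F_def by blast
      thus ?thesis by (rule finite_subset) (simp add: finD)
    qed
    have step1: "real (Suc m) * (\<Sum>S\<in>F. g S) = (\<Sum>S\<in>F. \<Sum>x\<in>{x. x \<in> D \<and> x \<in> S}. g S)"
    proof -
      have "real (Suc m) * (\<Sum>S\<in>F. g S) = (\<Sum>S\<in>F. real (Suc m) * g S)"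
        by (simp add: sum_distrib_left)
      also have "\<dots> = (\<Sum>S\<in>F. \<Sum>x\<in>{x. x \<in> D \<and> x \<in> S}. g S)"
      proof (rule sum.cong[OF refl])
        fix S assume "S \<in> F"
        hence S: "S \<subseteq> D" "card S = Suc m" unfolding F_def by auto
        have "{x. x \<in> D \<and> x \<in> S} = S" using S(1) by blast
        thus "real (Suc m) * g S = (\<Sum>x\<in>{x. x \<in> D \<and> x \<in> S}. g S)" using S(2) by simp
      qed
      finally show ?thesis .
    qed
    have step2: "(\<Sum>S\<in>F. \<Sum>x\<in>{x. x \<in> D \<and> x \<in> S}. g S) = (\<Sum>x\<in>D. \<Sum>S\<in>{S. S \<in> F \<and> x \<in> S}. g S)"
      by (rule sum.swap_restrict[OF finF finD])
    have step3: "(\<Sum>S\<in>{S. S \<in> F \<and> x \<in> S}. g S) = (\<Sum>S'\<in>G x. g (insert x S'))" if xD: "x \<in> D" for x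
    proof -
      have img: "{S. S \<in> F \<and> x \<in> S} = insert x ` G x"
      proof (rule set_eqI)
        fix S
        show "S \<in> {S. S \<in> F \<and> x \<in> S} \<longleftrightarrow> S \<in> insert x ` G x"
        proof
          assume "S \<in> {S. S \<in> F \<and> x \<in> S}"
          hence S: "S \<subseteq> D" "card S = Suc m" "x \<in> S" unfolding F_def by auto
          have fS: "finite S" using finD S(1) by (rule finite_subset[rotated])
          have "card (S - {x}) = m" using S fS by simp
          hence "S - {x} \<in> G x" unfolding G_def using S(1) by blast
          moreover have "S = insert x (S - {x})" using S(3) by blast
          ultimately show "S \<in> insert x ` G x" by blast
        next
          assume "S \<in> insert x ` G x"
          then obtain S' where S': "S' \<subseteq> D - {x}" "card S' = m" "S = insert x S'" unfolding G_def by blast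
          have fS': "finite S'" using finD S'(1) by (meson finite_Diff finite_subset)
          have "x \<notin> S'" using S'(1) by blast
          hence "card S = Suc m" using S' fS' by simp
          moreover have "S \<subseteq> D" using S'(1,3) xD by blast
          ultimately show "S \<in> {S. S \<in> F \<and> x \<in> S}" unfolding F_def using S'(3) by blast
        qed
      qed
      have inj: "inj_on (insert x) (G x)"
      proof (rule inj_onI)
        fix S1 S2 assume "S1 \<in> G x" "S2 \<in> G x" "insert x S1 = insert x S2"
        thus "S1 = S2" unfolding G_def by blast
      qed
      show ?thesis unfolding img by (simp add: sum.reindex[OF inj])
    qed
    have step4: "(\<Sum>S'\<in>G x. g (insert x S')) \<le> C * hh n K (rk indep (insert x X))" if xD: "x \<in> D" for x
    proof -
      have T1: "insert x T \<subseteq> B" using T(1) xD unfolding D_def by blast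
      have T2: "insert x T \<subseteq> insert x X" using T(2) by blast
      have xT: "x \<notin> T" using xD unfolding D_def by blast
      have cT: "card (insert x T) = Suc (card T)" using finT xT by simp
      have GG: "G x = {S. S \<subseteq> B - insert x T \<and> card S = m}" unfolding G_def D_def by auto
      have gg: "g (insert x S') = hh n K (rk indep (insert x X \<union> S'))" for S'
        unfolding g_def by (simp add: Un_insert_left Un_insert_right)
      have "(\<Sum>S'\<in>G x. g (insert x S')) = (\<Sum>S\<in>{S. S \<subseteq> B - insert x T \<and> card S = m}. hh n K (rk indep (insert x X \<union> S)))"
        unfolding GG gg by simp
      also have "\<dots> \<le> real ((K - card (insert x T)) choose m) * hh n K (rk indep (insert x X))"
        using Suc.IH T1 T2 by blast
      finally show ?thesis unfolding C_def cT .
    qed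
    have "real (Suc m) * (\<Sum>S\<in>F. g S) = (\<Sum>x\<in>D. \<Sum>S'\<in>G x. g (insert x S'))"
      using step1 step2 step3 by simp
    also have "\<dots> \<le> (\<Sum>x\<in>D. C * hh n K (rk indep (insert x X)))"
      by (rule sum_mono) (rule step4)
    also have "\<dots> = C * (\<Sum>x\<in>B - T. hh n K (rk indep (insert x X)))"
      unfolding D_def by (simp add: sum_distrib_left)
    also have "\<dots> \<le> C * (real (K - card T) * hh n K (rk indep X))"
    proof (rule mult_left_mono)
      show "(\<Sum>x\<in>B - T. hh n K (rk indep (insert x X))) \<le> real (K - card T) * hh n K (rk indep X)"
        by (rule block_step[OF B rE Kn T])
      show "0 \<le> C" unfolding C_def by simp
    qed
    also have "\<dots> = real (Suc m) * (real ((K - card T) choose Suc m) * hh n K (rk indep X))"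
    proof -
      have e: "K - Suc (card T) = K - card T - Suc 0" by simp
      have n1: "((K - Suc (card T)) choose m) * (K - card T) = ((K - card T) choose Suc m) * Suc m"
        unfolding e by (rule binom_id)
      have "real (((K - Suc (card T)) choose m) * (K - card T)) = real (((K - card T) choose Suc m) * Suc m)"
        by (simp only: n1)
      hence "real ((K - Suc (card T)) choose m) * real (K - card T) = real ((K - card T) choose Suc m) * real (Suc m)"
        by (simp only: of_nat_mult)
      hence eq: "C * real (K - card T) = real ((K - card T) choose Suc m) * real (Suc m)" unfolding C_def .
      have "C * (real (K - card T) * hh n K (rk indep X)) = (C * real (K - card T)) * hh n K (rk indep X)"
        by (simp only: mult.assoc)
      also have "\<dots> = (real ((K - card T) choose Suc m) * real (Suc m)) * hh n K (rk indep X)"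
        by (simp only: eq)
      also have "\<dots> = real (Suc m) * (real ((K - card T) choose Suc m) * hh n K (rk indep X))"
        by (simp only: mult_ac)
      finally show ?thesis .
    qed
    finally have "real (Suc m) * (\<Sum>S\<in>F. g S) \<le> real (Suc m) * (real ((K - card T) choose Suc m) * hh n K (rk indep X))" .
    hence "(\<Sum>S\<in>F. g S) \<le> real ((K - card T) choose Suc m) * hh n K (rk indep X)"
      by (rule mult_left_le_imp_le) simp
    thus "(\<Sum>S\<in>{S. S \<subseteq> B - T \<and> card S = Suc m}. hh n K (rk indep (X \<union> S)))
      \<le> real ((K - card T) choose Suc m) * hh n K (rk indep X)"
      unfolding F_def D_def g_def .
  qed
qed

end

lemma binom_step: "Suc k * (n choose Suc k) = (n - k) * (n choose k)"
  using binomial_absorption[of k n] binomial_absorb_comp[of n k] by simp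

lemma ratio_aux:
  fixes K n q :: nat
  assumes "K \<le> n"
  shows "real (K choose q) * real n ^ q \<le> real (n choose q) * real K ^ q"
proof (induction q)
  case 0 show ?case by simp
next
  case (Suc q)
  show ?case
  proof (cases "K < Suc q")
    case True
    thus ?thesis by (simp add: binomial_eq_0)
  next
    case False
    hence qK: "q < K" by simp
    have e1: "real (Suc q) * real (K choose Suc q) = real (K - q) * real (K choose q)"
      using binom_step[of q K] by (metis of_nat_mult)
    have e2: "real (Suc q) * real (n choose Suc q) = real (n - q) * real (n choose q)"
      using binom_step[of q n] by (metis of_nat_mult)
    have rK: "real (K - q) = real K - real q" using qK by simp
    have rn: "real (n - q) = real n - real q" using qK assms by simp
    have kq: "real K * real q \<le> real n * real q"
      using assms by (intro mult_right_mono) auto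
    have ineq: "real (K - q) * real n \<le> real (n - q) * real K"
      unfolding rK rn using kq by (simp add: algebra_simps)
    have A: "0 \<le> real (K - q) * real n" by simp
    have "real (Suc q) * (real (K choose Suc q) * real n ^ Suc q)
          = (real (Suc q) * real (K choose Suc q)) * (real n ^ q * real n)"
      by (simp only: power_Suc mult_ac)
    also have "\<dots> = (real (K - q) * real (K choose q)) * (real n ^ q * real n)"
      by (simp only: e1)
    also have "\<dots> = (real (K choose q) * real n ^ q) * (real (K - q) * real n)"
      by (simp only: mult_ac)
    also have "\<dots> \<le> (real (n choose q) * real K ^ q) * (real (K - q) * real n)"
      by (rule mult_right_mono[OF Suc.IH A])
    also have "\<dots> \<le> (real (n choose q) * real K ^ q) * (real (n - q) * real K)"
      by (rule mult_left_mono[OF ineq]) simp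
    also have "\<dots> = (real (n - q) * real (n choose q)) * (real K ^ q * real K)"
      by (simp only: mult_ac)
    also have "\<dots> = (real (Suc q) * real (n choose Suc q)) * (real K ^ q * real K)"
      by (simp only: e2)
    also have "\<dots> = real (Suc q) * (real (n choose Suc q) * real K ^ Suc q)"
      by (simp only: power_Suc mult_ac)
    finally show ?thesis by (rule mult_left_le_imp_le) simp
  qed
qed

lemma ratio_bound:
  fixes K n q \<alpha> :: nat
  assumes "K < n" "q = min \<alpha> n"
  shows "real (K choose q) / real (n choose q) \<le> (real K / real n) ^ \<alpha>"
proof (cases "\<alpha> \<le> n")
  case True
  hence q: "q = \<alpha>" using assms by simp
  have pos: "0 < real (n choose q)" using True q by simp
  have npos: "0 < real n" using assms by simp
  have "real (K choose q) * real n ^ q \<le> real (n choose q) * real K ^ q"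
    by (rule ratio_aux) (use assms in simp)
  hence "real (K choose q) / real (n choose q) \<le> real K ^ q / real n ^ q"
    using pos npos by (simp add: divide_simps mult.commute)
  thus ?thesis using q by (simp add: power_divide)
next
  case False
  hence "q = n" using assms by simp
  hence "K < q" using assms by simp
  thus ?thesis by (simp add: binomial_eq_0)
qed

context
  fixes E :: "'a set" and indep :: "'a set \<Rightarrow> bool"
  assumes M: "matroid E indep"
begin

lemma multi:
  fixes B :: "nat \<Rightarrow> 'a set" and I :: "nat set"
  assumes rE: "rk indep E = n" and Kn: "K \<le> n" and qn: "q \<le> n"
    and finA: "finite A" and BA: "\<forall>i\<in>A. indep (B i) \<and> card (B i) = n"
  shows "\<forall>X. (\<integral>\<^sup>+f. ennreal (hh n K (rk indep (X \<union> \<Union>(f ` (A \<inter> I)))))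
            \<partial>measure_pmf (Pi_pmf A {} (\<lambda>i. pmf_of_set {S. S \<subseteq> B i \<and> card S = q})))
         \<le> ennreal ((real (K choose q) / real (n choose q)) ^ card (A \<inter> I) * hh n K (rk indep X))"
  using finA BA
proof (induction A rule: finite_induct)
  case empty
  show ?case by simp
next
  case (insert a A)
  define p where "p = (\<lambda>i. pmf_of_set {S. S \<subseteq> B i \<and> card S = q})"
  define c where "c = real (K choose q) / real (n choose q)"
  define Ca where "Ca = {S. S \<subseteq> B a \<and> card S = q}"
  have c0: "0 \<le> c" unfolding c_def by simp
  have Ba: "indep (B a)" "card (B a) = n" using insert.prems by auto
  have finBa: "finite (B a)" by (rule indep_finite[OF M Ba(1)])
  have cCa: "card Ca = n choose q" unfolding Ca_def using n_subsets[OF finBa, of q] Ba(2) by simp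
  have finCa: "finite Ca" unfolding Ca_def using finBa by simp
  have neCa: "Ca \<noteq> {}"
  proof
    assume "Ca = {}"
    hence "card Ca = 0" by simp
    thus False using cCa qn by simp
  qed
  have pa: "p a = pmf_of_set Ca" unfolding p_def Ca_def by simp
  have IH: "\<forall>X. (\<integral>\<^sup>+f. ennreal (hh n K (rk indep (X \<union> \<Union>(f ` (A \<inter> I))))) \<partial>measure_pmf (Pi_pmf A {} p))
         \<le> ennreal (c ^ card (A \<inter> I) * hh n K (rk indep X))"
    using insert.IH insert.prems unfolding p_def c_def by simp
  have pi: "Pi_pmf (insert a A) {} p = map_pmf (\<lambda>(y,f). f(a:=y)) (pair_pmf (p a) (Pi_pmf A {} p))"
    by (rule Pi_pmf_insert[OF insert.hyps(1,2)])
  have int_eq: "(\<integral>\<^sup>+f. G f \<partial>measure_pmf (Pi_pmf (insert a A) {} p))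
      = (\<integral>\<^sup>+y. (\<integral>\<^sup>+f. G (f(a:=y)) \<partial>measure_pmf (Pi_pmf A {} p)) \<partial>measure_pmf (p a))" for G
    unfolding pi by (simp add: case_prod_unfold nn_integral_pair_pmf')
  have main: "(\<integral>\<^sup>+f. ennreal (hh n K (rk indep (X \<union> \<Union>(f ` (insert a A \<inter> I))))) \<partial>measure_pmf (Pi_pmf (insert a A) {} p))
         \<le> ennreal (c ^ card (insert a A \<inter> I) * hh n K (rk indep X))" for X
  proof (cases "a \<in> I")
    case True
    have U: "\<Union>((f(a:=y)) ` (insert a A \<inter> I)) = y \<union> \<Union>(f ` (A \<inter> I))" for f :: "nat \<Rightarrow> 'a set" and y
    proof -
      have e1: "insert a A \<inter> I = insert a (A \<inter> I)" using True by blast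
      have e2: "(f(a:=y)) ` (A \<inter> I) = f ` (A \<inter> I)"
        using insert.hyps(2) by (intro image_cong) auto
      show ?thesis unfolding e1 image_insert e2 by simp
    qed
    have cardI: "card (insert a A \<inter> I) = Suc (card (A \<inter> I))"
    proof -
      have e1: "insert a A \<inter> I = insert a (A \<inter> I)" using True by blast
      have "a \<notin> A \<inter> I" using insert.hyps(2) by blast
      moreover have "finite (A \<inter> I)" using insert.hyps(1) by simp
      ultimately show ?thesis unfolding e1 by simp
    qed
    define m where "m = card (A \<inter> I)"
    have inner: "(\<integral>\<^sup>+f. ennreal (hh n K (rk indep (X \<union> \<Union>((f(a:=y)) ` (insert a A \<inter> I))))) \<partial>measure_pmf (Pi_pmf A {} p))
        \<le> ennreal (c ^ m * hh n K (rk indep (X \<union> y)))" for y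
    proof -
      have "(\<lambda>f. ennreal (hh n K (rk indep (X \<union> \<Union>((f(a:=y)) ` (insert a A \<inter> I))))))
          = (\<lambda>f. ennreal (hh n K (rk indep ((X \<union> y) \<union> \<Union>(f ` (A \<inter> I))))))"
        unfolding U by (simp add: Un_assoc)
      thus ?thesis using IH unfolding m_def by simp
    qed
    have "(\<integral>\<^sup>+f. ennreal (hh n K (rk indep (X \<union> \<Union>(f ` (insert a A \<inter> I))))) \<partial>measure_pmf (Pi_pmf (insert a A) {} p))
        = (\<integral>\<^sup>+y. (\<integral>\<^sup>+f. ennreal (hh n K (rk indep (X \<union> \<Union>((f(a:=y)) ` (insert a A \<inter> I))))) \<partial>measure_pmf (Pi_pmf A {} p)) \<partial>measure_pmf (p a))"
      by (rule int_eq)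
    also have "\<dots> \<le> (\<integral>\<^sup>+y. ennreal (c ^ m * hh n K (rk indep (X \<union> y))) \<partial>measure_pmf (p a))"
      by (rule nn_integral_mono) (rule inner)
    also have "\<dots> = (\<Sum>y\<in>Ca. ennreal (c ^ m * hh n K (rk indep (X \<union> y)))) / of_nat (card Ca)"
      unfolding pa by (rule nn_integral_pmf_of_set[OF neCa finCa])
    also have "\<dots> = ennreal ((\<Sum>y\<in>Ca. c ^ m * hh n K (rk indep (X \<union> y))) / real (card Ca))"
    proof -
      have "(\<Sum>y\<in>Ca. ennreal (c ^ m * hh n K (rk indep (X \<union> y)))) = ennreal (\<Sum>y\<in>Ca. c ^ m * hh n K (rk indep (X \<union> y)))"
        by (rule sum_ennreal) (simp add: c0 hh_nonneg)
      moreover have "(of_nat (card Ca) :: ennreal) = ennreal (real (card Ca))"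
        by (simp add: ennreal_of_nat_eq_real_of_nat)
      moreover have "0 < real (card Ca)" using finCa neCa by (simp add: card_gt_0_iff)
      moreover have "0 \<le> (\<Sum>y\<in>Ca. c ^ m * hh n K (rk indep (X \<union> y)))"
        by (rule sum_nonneg) (simp add: c0 hh_nonneg)
      ultimately show ?thesis by (simp add: divide_ennreal)
    qed
    also have "\<dots> \<le> ennreal (c ^ Suc m * hh n K (rk indep X))"
    proof (rule ennreal_leI)
      have blk: "(\<Sum>S\<in>{S. S \<subseteq> B a - {} \<and> card S = q}. hh n K (rk indep (X \<union> S)))
          \<le> real ((K - card ({}::'a set)) choose q) * hh n K (rk indep X)"
        using block[OF M Ba rE Kn] by blast
      hence blk': "(\<Sum>y\<in>Ca. hh n K (rk indep (X \<union> y))) \<le> real (K choose q) * hh n K (rk indep X)"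
        unfolding Ca_def by simp
      have pos: "0 < real (card Ca)" using finCa neCa by (simp add: card_gt_0_iff)
      have "(\<Sum>y\<in>Ca. c ^ m * hh n K (rk indep (X \<union> y))) / real (card Ca)
          = c ^ m * ((\<Sum>y\<in>Ca. hh n K (rk indep (X \<union> y))) / real (card Ca))"
        by (simp add: sum_distrib_left)
      also have "\<dots> \<le> c ^ m * (real (K choose q) * hh n K (rk indep X) / real (card Ca))"
        using blk' pos c0 by (intro mult_left_mono divide_right_mono) auto
      also have "\<dots> = c ^ Suc m * hh n K (rk indep X)"
        unfolding c_def cCa by simp
      finally show "(\<Sum>y\<in>Ca. c ^ m * hh n K (rk indep (X \<union> y))) / real (card Ca) \<le> c ^ Suc m * hh n K (rk indep X)" .
    qed
    finally show ?thesis unfolding cardI m_def .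
  next
    case False
    have e1: "insert a A \<inter> I = A \<inter> I" using False by blast
    have U: "\<Union>((f(a:=y)) ` (insert a A \<inter> I)) = \<Union>(f ` (A \<inter> I))" for f :: "nat \<Rightarrow> 'a set" and y
    proof -
      have e2: "(f(a:=y)) ` (A \<inter> I) = f ` (A \<inter> I)"
        using insert.hyps(2) by (intro image_cong) auto
      show ?thesis unfolding e1 e2 ..
    qed
    have "(\<integral>\<^sup>+f. ennreal (hh n K (rk indep (X \<union> \<Union>(f ` (insert a A \<inter> I))))) \<partial>measure_pmf (Pi_pmf (insert a A) {} p))
        = (\<integral>\<^sup>+y. (\<integral>\<^sup>+f. ennreal (hh n K (rk indep (X \<union> \<Union>((f(a:=y)) ` (insert a A \<inter> I))))) \<partial>measure_pmf (Pi_pmf A {} p)) \<partial>measure_pmf (p a))"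
      by (rule int_eq)
    also have "\<dots> = (\<integral>\<^sup>+y. (\<integral>\<^sup>+f. ennreal (hh n K (rk indep (X \<union> \<Union>(f ` (A \<inter> I))))) \<partial>measure_pmf (Pi_pmf A {} p)) \<partial>measure_pmf (p a))"
      unfolding U ..
    also have "\<dots> = (\<integral>\<^sup>+f. ennreal (hh n K (rk indep (X \<union> \<Union>(f ` (A \<inter> I))))) \<partial>measure_pmf (Pi_pmf A {} p))"
      by (simp add: measure_pmf.emeasure_space_1)
    also have "\<dots> \<le> ennreal (c ^ card (A \<inter> I) * hh n K (rk indep X))" using IH by blast
    finally show ?thesis unfolding e1 .
  qed
  show ?case using main unfolding p_def c_def by blast
qed

end

lemma basis_card:
  assumes M: "matroid E indep" and rE: "rk indep E = n" and B: "matroid_basis E indep B"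
  shows "card B = n"
proof -
  have iB: "indep B" and BE: "B \<subseteq> E" and mx: "\<forall>X. X \<subseteq> E \<and> indep X \<and> B \<subseteq> X \<longrightarrow> X = B"
    using B unfolding matroid_basis_def by auto
  have le: "card B \<le> n" using rk_ge[OF M iB BE] rE by simp
  show ?thesis
  proof (rule ccontr)
    assume "card B \<noteq> n"
    hence lt: "card B < n" using le by simp
    obtain Y where Y: "Y \<subseteq> E" "indep Y" "card Y = rk indep E" using rk_obtain[OF M, of E] by blast
    have lt2: "card B < card Y" using lt Y(3) rE by simp
    obtain y where y: "y \<in> Y - B" "indep (insert y B)" using indep_aug[OF M iB Y(2) lt2] by blast
    have "insert y B \<subseteq> E" by (rule indep_sub[OF M y(2)])
    hence "insert y B = B" using mx y(2) by blast
    thus False using y(1) by blast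
  qed
qed

lemma hall_to_tb:
  assumes M: "matroid E indep" and rE: "rk indep E = n"
    and disj: "\<forall>i\<in>{1..n}. \<forall>j\<in>{1..n}. i \<noteq> j \<longrightarrow> B i \<inter> B j = {}"
    and SB: "\<forall>i\<in>{1..n}. S i \<subseteq> B i" and BE: "\<forall>i\<in>{1..n}. B i \<subseteq> E"
    and hall: "\<forall>I\<subseteq>{1..n}. card I \<le> rk indep (\<Union>(S ` I))"
  shows "has_transversal_basis E indep n S"
proof -
  have SE: "\<forall>i\<in>{1..n}. S i \<subseteq> E" using SB BE by blast
  obtain f where f: "\<forall>i\<in>{1..n}. f i \<in> S i" "inj_on f {1..n}" "indep (f ` {1..n})"
    using rado[OF M _ SE hall] by blast
  define T where "T = f ` {1..n}"
  have iT: "indep T" using f(3) unfolding T_def .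
  have TE: "T \<subseteq> E" by (rule indep_sub[OF M iT])
  have cT: "card T = n" unfolding T_def using card_image[OF f(2)] by simp
  have basis: "matroid_basis E indep T"
    unfolding matroid_basis_def
  proof (intro conjI allI impI)
    show "indep T" by (rule iT)
    show "T \<subseteq> E" by (rule TE)
    fix X assume X: "X \<subseteq> E \<and> indep X \<and> T \<subseteq> X"
    have "card X \<le> n" using rk_ge[OF M, of X E] X rE by simp
    moreover have "finite X" using X indep_finite[OF M] by blast
    ultimately show "X = T" using X cT by (metis card_subset_eq le_antisym card_mono)
  qed
  have one: "card (T \<inter> S i) = 1" if i: "i \<in> {1..n}" for i
  proof -
    have "T \<inter> S i = {f i}"
    proof (rule set_eqI)
      fix z
      show "z \<in> T \<inter> S i \<longleftrightarrow> z \<in> {f i}"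
      proof
        assume z: "z \<in> T \<inter> S i"
        then obtain j where j: "j \<in> {1..n}" "z = f j" unfolding T_def by blast
        show "z \<in> {f i}"
        proof (rule ccontr)
          assume "z \<notin> {f i}"
          hence "j \<noteq> i" using j by blast
          moreover have "z \<in> B j" using f(1) j SB by blast
          moreover have "z \<in> B i" using z SB i by blast
          ultimately show False using disj i j(1) by blast
        qed
      next
        assume "z \<in> {f i}"
        thus "z \<in> T \<inter> S i" using f(1) i unfolding T_def by blast
      qed
    qed
    thus ?thesis by simp
  qed
  show ?thesis unfolding has_transversal_basis_def using basis one by blast
qed

theorem lemma1p7:
  fixes E :: "'a set" and indep :: "'a set \<Rightarrow> bool"
    and n :: nat and B :: "nat \<Rightarrow> 'a set" and \<alpha> :: nat
  assumes "matroid E indep"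
    and "matroid_rank E indep = n"
    and "n \<ge> 2"
    and "\<forall>i\<in>{1..n}. matroid_basis E indep (B i)"
    and "\<forall>i\<in>{1..n}. \<forall>j\<in>{1..n}. i \<noteq> j \<longrightarrow> B i \<inter> B j = {}"
    and "\<alpha> = 3 * nat \<lceil>ln (real n)\<rceil>"
  shows "measure_pmf.prob (random_subsets n B (min \<alpha> n))
           {S. \<not> has_transversal_basis E indep n S}
         \<le> (\<Sum>k=1..n. real (n choose k) * real (n choose (k - 1))
                        * ((real k - 1) / real n) ^ (k * \<alpha>))"
proof -
  note M = assms(1)
  define q where "q = min \<alpha> n"
  have qn: "q \<le> n" unfolding q_def by simp
  have rE: "rk indep E = n" using assms(2) unfolding matroid_rank_def rk_def .
  have Bi: "indep (B i) \<and> card (B i) = n \<and> B i \<subseteq> E" if "i \<in> {1..n}" for i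
  proof -
    have b: "matroid_basis E indep (B i)" using assms(4) that by blast
    thus ?thesis using basis_card[OF M rE b] unfolding matroid_basis_def by blast
  qed
  define C where "C i = {S. S \<subseteq> B i \<and> card S = q}" for i
  define p where "p = (\<lambda>i. pmf_of_set (C i))"
  define P where "P = random_subsets n B q"
  have P_eq: "P = Pi_pmf {1..n} {} p" unfolding P_def p_def C_def random_subsets_def ..
  have finC: "finite (C i)" if "i \<in> {1..n}" for i
  proof -
    have "finite (B i)" using Bi[OF that] indep_finite[OF M] by blast
    thus ?thesis unfolding C_def by simp
  qed
  have neC: "C i \<noteq> {}" if "i \<in> {1..n}" for i
  proof
    assume "C i = {}"
    hence "card (C i) = 0" by simp
    moreover have "finite (B i)" using Bi[OF that] indep_finite[OF M] by blast
    hence "card (C i) = n choose q" unfolding C_def using n_subsets[of "B i" q] Bi[OF that] by simp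
    ultimately show False using qn by simp
  qed
  have supp: "S i \<subseteq> B i" if S: "S \<in> set_pmf P" and i: "i \<in> {1..n}" for S i
  proof -
    have "S \<in> PiE_dflt {1..n} {} (set_pmf \<circ> p)" using S unfolding P_eq by (simp add: set_Pi_pmf)
    hence "S i \<in> set_pmf (p i)" using i unfolding PiE_dflt_def by auto
    hence "S i \<in> C i" unfolding p_def using finC[OF i] neC[OF i] by simp
    thus ?thesis unfolding C_def by blast
  qed
  define Ev where "Ev I = {S. rk indep (\<Union>(S ` I)) < card I}" for I :: "nat set"
  define Is where "Is k = {I. I \<subseteq> {1..n} \<and> card I = k}" for k
  have finIs: "finite (Is k)" for k
  proof -
    have "Is k \<subseteq> Pow {1..n}" unfolding Is_def by blast
    thus ?thesis by (rule finite_subset) simp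
  qed
  have cIs: "card (Is k) = n choose k" for k
    unfolding Is_def using n_subsets[of "{1..n::nat}" k] by simp
  have sub: "{S. \<not> has_transversal_basis E indep n S} \<inter> set_pmf P \<subseteq> (\<Union>k\<in>{1..n}. \<Union>I\<in>Is k. Ev I)"
  proof
    fix S assume S: "S \<in> {S. \<not> has_transversal_basis E indep n S} \<inter> set_pmf P"
    have "\<not> (\<forall>I\<subseteq>{1..n}. card I \<le> rk indep (\<Union>(S ` I)))"
    proof
      assume hall: "\<forall>I\<subseteq>{1..n}. card I \<le> rk indep (\<Union>(S ` I))"
      have SB: "\<forall>i\<in>{1..n}. S i \<subseteq> B i" using supp S by blast
      have BE: "\<forall>i\<in>{1..n}. B i \<subseteq> E" using Bi by blast
      have "has_transversal_basis E indep n S" by (rule hall_to_tb[OF M rE assms(5) SB BE hall])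
      thus False using S by blast
    qed
    then obtain I where I: "I \<subseteq> {1..n}" "rk indep (\<Union>(S ` I)) < card I" by (auto simp: not_le)
    have k1: "card I \<in> {1..n}"
    proof -
      have "card I \<le> card {1..n}" using I(1) by (intro card_mono) auto
      thus ?thesis using I(2) by simp
    qed
    have "I \<in> Is (card I)" unfolding Is_def using I(1) by blast
    moreover have "S \<in> Ev I" unfolding Ev_def using I(2) by blast
    ultimately show "S \<in> (\<Union>k\<in>{1..n}. \<Union>I\<in>Is k. Ev I)" using k1 by blast
  qed
  define ck where "ck k = real ((k - 1) choose q) / real (n choose q)" for k
  have ev_bound: "measure_pmf.prob P (Ev I) \<le> real (n choose (k - 1)) * ck k ^ k"
    if k: "k \<in> {1..n}" and I: "I \<in> Is k" for k I
  proof -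
    define K where "K = k - 1"
    have kn: "k \<le> n" using k by simp
    have Kn: "K \<le> n" unfolding K_def using kn by arith
    have I1: "I \<subseteq> {1..n}" "card I = k" using I unfolding Is_def by auto
    have BA: "\<forall>i\<in>{1..n}. indep (B i) \<and> card (B i) = n" using Bi by blast
    have mult: "(\<integral>\<^sup>+f. ennreal (hh n K (rk indep ({} \<union> \<Union>(f ` ({1..n} \<inter> I)))))
            \<partial>measure_pmf (Pi_pmf {1..n} {} (\<lambda>i. pmf_of_set {S. S \<subseteq> B i \<and> card S = q})))
         \<le> ennreal ((real (K choose q) / real (n choose q)) ^ card ({1..n} \<inter> I) * hh n K (rk indep {}))"
      using multi[OF M rE Kn qn _ BA, of I] by blast
    have e1: "{1..n} \<inter> I = I" using I1 by blast
    have e2: "Pi_pmf {1..n} {} (\<lambda>i. pmf_of_set {S. S \<subseteq> B i \<and> card S = q}) = P"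
      unfolding P_eq p_def C_def ..
    have e3: "hh n K (rk indep {}) = real (n choose K)" unfolding rk_empty[OF M] hh_def by simp
    have mult2: "(\<integral>\<^sup>+f. ennreal (hh n K (rk indep (\<Union>(f ` I)))) \<partial>measure_pmf P)
         \<le> ennreal (ck k ^ k * real (n choose K))"
    proof -
      have m: "(\<integral>\<^sup>+f. ennreal (hh n K (rk indep (\<Union>(f ` I)))) \<partial>measure_pmf P)
         \<le> ennreal ((real (K choose q) / real (n choose q)) ^ k * real (n choose K))"
        using mult unfolding e1 e2 e3 I1(2) by simp
      have "ck k = real (K choose q) / real (n choose q)" unfolding ck_def K_def ..
      thus ?thesis using m by (simp add: mult.commute)
    qed
    have ind: "indicator (Ev I) f \<le> ennreal (hh n K (rk indep (\<Union>(f ` I))))" for f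
    proof (cases "f \<in> Ev I")
      case True
      hence "rk indep (\<Union>(f ` I)) \<le> K" unfolding Ev_def K_def I1(2) by simp
      hence "1 \<le> hh n K (rk indep (\<Union>(f ` I)))" using Kn by (rule hh_ge1)
      thus ?thesis using True by simp
    next
      case False thus ?thesis by simp
    qed
    have "emeasure (measure_pmf P) (Ev I) = (\<integral>\<^sup>+f. indicator (Ev I) f \<partial>measure_pmf P)"
      by simp
    also have "\<dots> \<le> (\<integral>\<^sup>+f. ennreal (hh n K (rk indep (\<Union>(f ` I)))) \<partial>measure_pmf P)"
      by (rule nn_integral_mono) (rule ind)
    also have "\<dots> \<le> ennreal (ck k ^ k * real (n choose K))" by (rule mult2)
    finally have "ennreal (measure_pmf.prob P (Ev I)) \<le> ennreal (ck k ^ k * real (n choose K))"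
      by (simp add: measure_pmf.emeasure_eq_measure)
    moreover have "0 \<le> ck k ^ k * real (n choose K)" unfolding ck_def by simp
    ultimately have "measure_pmf.prob P (Ev I) \<le> ck k ^ k * real (n choose K)"
      by (simp add: ennreal_le_iff)
    thus ?thesis unfolding K_def by (simp add: mult.commute)
  qed
  have ck_bound: "ck k ^ k \<le> ((real k - 1) / real n) ^ (k * \<alpha>)" if k: "k \<in> {1..n}" for k
  proof -
    have "ck k \<le> (real (k - 1) / real n) ^ \<alpha>"
      unfolding ck_def by (rule ratio_bound) (use k q_def in auto)
    moreover have "0 \<le> ck k" unfolding ck_def by simp
    ultimately have "ck k ^ k \<le> ((real (k - 1) / real n) ^ \<alpha>) ^ k" by (rule power_mono)
    also have "\<dots> = (real (k - 1) / real n) ^ (k * \<alpha>)" by (simp add: power_mult[symmetric] mult.commute)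
    also have "real (k - 1) = real k - 1" using k by simp
    finally show ?thesis .
  qed
  have "measure_pmf.prob P {S. \<not> has_transversal_basis E indep n S}
      = measure_pmf.prob P ({S. \<not> has_transversal_basis E indep n S} \<inter> set_pmf P)"
    by (simp add: measure_Int_set_pmf)
  also have "\<dots> \<le> measure_pmf.prob P (\<Union>k\<in>{1..n}. \<Union>I\<in>Is k. Ev I)"
    by (rule measure_pmf.finite_measure_mono[OF sub]) simp
  also have "\<dots> \<le> (\<Sum>k\<in>{1..n}. measure_pmf.prob P (\<Union>I\<in>Is k. Ev I))"
    by (rule measure_pmf.finite_measure_subadditive_finite) auto
  also have "\<dots> \<le> (\<Sum>k\<in>{1..n}. \<Sum>I\<in>Is k. measure_pmf.prob P (Ev I))"
    by (rule sum_mono) (rule measure_pmf.finite_measure_subadditive_finite, auto simp: finIs)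
  also have "\<dots> \<le> (\<Sum>k\<in>{1..n}. \<Sum>I\<in>Is k. real (n choose (k - 1)) * ck k ^ k)"
    by (rule sum_mono, rule sum_mono) (rule ev_bound)
  also have "\<dots> = (\<Sum>k\<in>{1..n}. real (n choose k) * real (n choose (k - 1)) * ck k ^ k)"
    by (rule sum.cong[OF refl]) (simp add: cIs)
  also have "\<dots> \<le> (\<Sum>k=1..n. real (n choose k) * real (n choose (k - 1)) * ((real k - 1) / real n) ^ (k * \<alpha>))"
    by (rule sum_mono) (use ck_bound in \<open>auto intro: mult_left_mono\<close>)
  finally show ?thesis unfolding P_def q_def .
qed

end
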